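(* Let $a,b\in\mathbb{B}^2\setminus\{0\}$ be distinct points with $|a|\neq|b|$ lying on a circle orthogonal to the unit circle. Put $\alpha=a(1-|b|^2)+b(1-|a|^2)$ and \[ \mathrm{cen}=\frac{\alpha}{2-a\overline{b}-\overline{a}b},\qquad p=\frac{\alpha}{2-|a|^2-|b|^2},\qquad m_{ab}=\frac{\alpha}{1-|a|^2|b|^2+\sqrt{(1-|a|^2)(1-|b|^2)}\,|1-\overline{a}b|}. \] Then $m_{ab}$ is the hyperbolic midpoint of the segment $[\mathrm{cen},p]$, i.e. $\rho_{\mathbb{B}^2}(\mathrm{cen},m_{ab})=\rho_{\mathbb{B}^2}(m_{ab},p)$. Moreover, $B^2(\mathrm{cen},|\mathrm{cen}-a|)=B_\rho\bigl(m_{ab},\rho_{\mathbb{B}^2}(a,b)/2\bigr)$.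
   Context: $\mathbb{B}^2$ is the unit disk in $\mathbb{C}$. The hyperbolic metric is given by $\mathrm{sh}\frac{\rho_{\mathbb{B}^2}(x,y)}{2}=\frac{|x-y|}{\sqrt{(1-|x|^2)(1-|y|^2)}}$ for $x,y\in\mathbb{B}^2$. $B^2(x,r)$ is the Euclidean disk with center $x$ and radius $r$, and $B_\rho(x,M)=\{y\in\mathbb{B}^2:\rho_{\mathbb{B}^2}(x,y)<M\}$ is the hyperbolic disk. (The point $m_{ab}$ is the hyperbolic midpoint of $a$ and $b$; $\mathrm{cen}$ is the intersection of the tangent lines at $a$ and $b$ to the hyperbolic geodesic circle through $a,b$; $p$ is the intersection of the line through $0$ and $\mathrm{cen}$ with the segment $[a,b]$.) *)

theory Defs
  imports "HOL-Analysis.Analysis"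
begin

definition hrho :: "complex \<Rightarrow> complex \<Rightarrow> real" where
  "hrho x y = 2 * arsinh (cmod (x - y) / sqrt ((1 - (cmod x)\<^sup>2) * (1 - (cmod y)\<^sup>2)))"

definition hball :: "complex \<Rightarrow> real \<Rightarrow> complex set" where
  "hball x M = {y. cmod y < 1 \<and> hrho x y < M}"

end

theory Submission
  imports Defs
begin
lemma L_aux: fixes N E D K w q t :: real assumes "E>0" "D>0" "K>0" "w>0" "q>0"
  shows "N*(w*t/(E*D))^2/((w^2*K/E^2)*(2*q*w*D/D^2)) = N*t^2/(2*q*w*D*K)"
  using assms by (simp add: field_simps power2_eq_square)
lemma R_aux: fixes N E D K w q t F :: real assumes "F>0" "D>0" "K>0" "w>0" "q>0"
  shows "N*(q*t/(F*D))^2/((2*q*w*D/D^2)*(q^2*K/F^2)) = N*t^2/(2*q*w*D*K)"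
  using assms by (simp add: field_simps power2_eq_square)
lemma core:
  fixes c0 q w N :: real
  assumes c0: "c0 > 0" and q: "q > 0" and w: "w > 0" and N: "N = c0^2 - q^2*w^2"
  shows "N < (c0+w^2)^2" "N < (c0+q^2)^2" "N < (c0+q*w)^2"
    "N*(1/(c0+w^2)-1/(c0+q*w))^2/((1-N/(c0+w^2)^2)*(1-N/(c0+q*w)^2))
     = N*(1/(c0+q*w)-1/(c0+q^2))^2/((1-N/(c0+q*w)^2)*(1-N/(c0+q^2)^2))"
    "(w/q - 1)/2 * (1 - N/(c0+q*w)^2) = ((c0+w^2)-(c0+q*w))/(c0+q*w)"
proof -
  have p1: "(c0+w^2)^2 - N = w^2*(2*c0+w^2+q^2)" unfolding N by (simp add: algebra_simps power2_eq_square)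
  have p2: "(c0+q^2)^2 - N = q^2*(2*c0+w^2+q^2)" unfolding N by (simp add: algebra_simps power2_eq_square)
  have p3: "(c0+q*w)^2 - N = 2*q*w*(c0+q*w)" unfolding N by (simp add: algebra_simps power2_eq_square)
  have pos: "w^2*(2*c0+w^2+q^2) > 0" "q^2*(2*c0+w^2+q^2) > 0" "2*q*w*(c0+q*w) > 0"
    using c0 q w by (auto intro!: mult_pos_pos add_pos_pos)
  show "N < (c0+w^2)^2" "N < (c0+q^2)^2" "N < (c0+q*w)^2" using p1 p2 p3 pos by linarith+
  have e1: "1-N/(c0+w^2)^2 = w^2*(2*c0+w^2+q^2)/(c0+w^2)^2"
  proof -
    have "(c0+w^2)^2 > 0" using c0 q w by (intro zero_less_power add_pos_pos mult_pos_pos) auto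
    then have "1-N/(c0+w^2)^2 = ((c0+w^2)^2 - N)/(c0+w^2)^2" by (simp add: diff_divide_distrib)
    then show ?thesis unfolding p1 .
  qed
  have e2: "1-N/(c0+q^2)^2 = q^2*(2*c0+w^2+q^2)/(c0+q^2)^2"
  proof -
    have "(c0+q^2)^2 > 0" using c0 q w by (intro zero_less_power add_pos_pos mult_pos_pos) auto
    then have "1-N/(c0+q^2)^2 = ((c0+q^2)^2 - N)/(c0+q^2)^2" by (simp add: diff_divide_distrib)
    then show ?thesis unfolding p2 .
  qed
  have e3: "1-N/(c0+q*w)^2 = 2*q*w*(c0+q*w)/(c0+q*w)^2"
  proof -
    have "(c0+q*w)^2 > 0" using c0 q w by (intro zero_less_power add_pos_pos mult_pos_pos) auto
    then have "1-N/(c0+q*w)^2 = ((c0+q*w)^2 - N)/(c0+q*w)^2" by (simp add: diff_divide_distrib)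
    then show ?thesis unfolding p3 .
  qed
  have P1: "c0+w^2>0" "c0+q*w>0" "c0+q^2>0" using c0 q w by (auto intro!: add_pos_nonneg add_pos_pos)
  have d1: "1/(c0+w^2)-1/(c0+q*w) = w*(q-w)/((c0+w^2)*(c0+q*w))"
    using P1 by (simp add: field_simps power2_eq_square)
  have d2: "1/(c0+q*w)-1/(c0+q^2) = q*(q-w)/((c0+q^2)*(c0+q*w))"
    using P1 by (simp add: field_simps power2_eq_square)
  have K: "2*c0+w^2+q^2 > 0" using c0 q w by (simp add: add_pos_nonneg)
  show "N*(1/(c0+w^2)-1/(c0+q*w))^2/((1-N/(c0+w^2)^2)*(1-N/(c0+q*w)^2))
     = N*(1/(c0+q*w)-1/(c0+q^2))^2/((1-N/(c0+q*w)^2)*(1-N/(c0+q^2)^2))"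
  proof -
    have L: "N*(w*(q-w)/((c0+w^2)*(c0+q*w)))^2/((w^2*(2*c0+w^2+q^2)/(c0+w^2)^2)*(2*q*w*(c0+q*w)/(c0+q*w)^2))
       = N*(q-w)^2/(2*q*w*(c0+q*w)*(2*c0+w^2+q^2))"
      using L_aux[of "c0+w^2" "c0+q*w" "2*c0+w^2+q^2" w q N "q-w"] c0 q w K P1 by simp
    have R: "N*(q*(q-w)/((c0+q^2)*(c0+q*w)))^2/((2*q*w*(c0+q*w)/(c0+q*w)^2)*(q^2*(2*c0+w^2+q^2)/(c0+q^2)^2))
       = N*(q-w)^2/(2*q*w*(c0+q*w)*(2*c0+w^2+q^2))"
      using R_aux[of "c0+q^2" "c0+q*w" "2*c0+w^2+q^2" w q N "q-w"] c0 q w K P1 by simp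
    show ?thesis unfolding e1 e2 e3 d1 d2 L R ..
  qed
  show "(w/q - 1)/2 * (1 - N/(c0+q*w)^2) = ((c0+w^2)-(c0+q*w))/(c0+q*w)"
  proof -
    have "2*q*w*(c0+q*w)/(c0+q*w)^2 = 2*q*w/(c0+q*w)" using P1 by (simp add: power2_eq_square)
    moreover have "(w/q - 1)*q = w - q" using q by (simp add: field_simps)
    moreover have "(w/q - 1)/2 * (2*q*w/(c0+q*w)) = ((w/q - 1)*q)*w/(c0+q*w)" by simp
    ultimately have "(w/q - 1)/2 * (2*q*w/(c0+q*w)) = (w*w-q*w)/(c0+q*w)" by (simp add: algebra_simps)
    with \<open>2*q*w*(c0+q*w)/(c0+q*w)^2 = 2*q*w/(c0+q*w)\<close> show ?thesis unfolding e3 by (simp add: power2_eq_square)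
  qed
qed

lemma cmod_sq_diff: "(cmod (z - y))^2 = (cmod z)^2 - 2*Re(y*cnj z) + (cmod y)^2"
  by (simp only: cmod_power2) (simp add: power2_eq_square algebra_simps)

lemma cmod_sq_divr: "(cmod (z / of_real s))^2 = (cmod z)^2 / s^2"
  by (simp add: norm_divide power_divide)

lemma re_divr: "Re (y * cnj (z / of_real s)) = Re (y * cnj z) / s"
  by (simp add: Re_divide_of_real[symmetric] del: Re_divide_of_real)

lemma cmod_sq_ray: "(cmod (z / of_real s - z / of_real t))^2 = (cmod z)^2 * (1/s - 1/t)^2"
proof -
  have "z / of_real s - z / of_real t = z * of_real (1/s - 1/t)"
    by (simp add: field_simps diff_divide_distrib)
  then show ?thesis by (simp only: norm_mult norm_of_real power_mult_distrib power2_abs)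
qed

lemma hrho_sq:
  assumes "cmod x < 1" "cmod y < 1"
  shows "hrho x y = 2 * arsinh (sqrt ((cmod (x - y))^2 / ((1 - (cmod x)^2) * (1 - (cmod y)^2))))"
  unfolding hrho_def by (simp add: real_sqrt_divide)

lemma pos_mult_less0_iff: "c > 0 \<Longrightarrow> (c * x < 0) = (x < (0::real))"
  by (simp add: mult_less_0_iff)

lemma key_aux:
  fixes N E D Z Y Ra A :: real
  assumes "E > 0" "D > 0" "N/D - E + D = 2*Ra - A*E"
  shows "(N/E^2 - 2*Z/E + Y) - (N/E^2 - 2*Ra/E + A) = D/E*((N/D^2 - 2*Z/D + Y) - (E-D)/D*(1-Y))"
proof -
  have "D/E*((N/D^2 - 2*Z/D + Y) - (E-D)/D*(1-Y)) = (N/D - 2*Z + D*Y - (E-D)*(1-Y))/E"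
    using assms by (simp add: field_simps power2_eq_square)
  also have "... = (N/D - E + D - 2*Z + E*Y)/E" by (simp add: algebra_simps)
  also have "... = (2*Ra - A*E - 2*Z + E*Y)/E" using assms(3) by simp
  also have "... = (N/E^2 - 2*Z/E + Y) - (N/E^2 - 2*Ra/E + A)"
    using assms by (simp add: field_simps)
  finally show ?thesis by simp
qed


theorem lemma2p15:
  fixes a b :: complex
  assumes "cmod a < 1" "cmod b < 1" "a \<noteq> 0" "b \<noteq> 0" "a \<noteq> b"
    and "cmod a \<noteq> cmod b"
    and "\<exists>c::complex. \<exists>r::real. r > 0 \<and> (cmod c)\<^sup>2 = 1 + r\<^sup>2
            \<and> cmod (a - c) = r \<and> cmod (b - c) = r"
  shows "let \<alpha> = a * of_real (1 - (cmod b)\<^sup>2) + b * of_real (1 - (cmod a)\<^sup>2);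
             cen = \<alpha> / (2 - a * cnj b - cnj a * b);
             p = \<alpha> / of_real (2 - (cmod a)\<^sup>2 - (cmod b)\<^sup>2);
             m = \<alpha> / of_real (1 - (cmod a)\<^sup>2 * (cmod b)\<^sup>2
                   + sqrt ((1 - (cmod a)\<^sup>2) * (1 - (cmod b)\<^sup>2)) * cmod (1 - cnj a * b))
         in hrho cen m = hrho m p \<and> ball cen (cmod (cen - a)) = hball m (hrho a b / 2)"
  proof -
  define A where "A = (cmod a)^2"
  define B where "B = (cmod b)^2"
  define r where "r = Re (cnj a * b)"
  define q where "q = sqrt ((1 - A) * (1 - B))"
  define w where "w = cmod (1 - cnj a * b)"
  define c0 where "c0 = 1 - A * B"
  define E where "E = c0 + w^2"
  define F where "F = c0 + q^2"
  define D where "D = c0 + q * w"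
  define al where "al = a * of_real (1 - B) + b * of_real (1 - A)"
  define N where "N = (cmod al)^2"
  define cen where "cen = al / of_real E"
  define p where "p = al / of_real F"
  define m where "m = al / of_real D"
  have A0: "0 \<le> A" "A < 1" unfolding A_def using assms(1) by (auto simp: power_less_one_iff abs_square_less_1)
  have B0: "0 \<le> B" "B < 1" unfolding B_def using assms(2) by (auto simp: abs_square_less_1)
  have qpos: "q > 0" unfolding q_def using A0 B0 by simp
  have q2: "q^2 = (1-A)*(1-B)" unfolding q_def using A0 B0 by simp
  have z1: "cmod (cnj a * b) < 1"
  proof -
    have "cmod (cnj a * b) = cmod a * cmod b" by (simp add: norm_mult)
    also have "... < 1" using mult_left_le_one_le[of "cmod b" "cmod a"] assms(1,2) by simp
    finally show ?thesis .
  qed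
  have wpos: "w > 0"
  proof -
    have "1 - cnj a * b \<noteq> 0" using z1 by auto
    then show ?thesis unfolding w_def by simp
  qed
  have zsq: "(cmod (cnj a * b))^2 = A * B" unfolding A_def B_def by (simp add: norm_mult power_mult_distrib)
  have w2: "w^2 = 1 - 2*r + A*B"
    unfolding w_def r_def using cmod_sq_diff[of 1 "cnj a * b"] zsq by simp
  have rlt: "r < 1" unfolding r_def using z1 complex_Re_le_cmod[of "cnj a * b"] by linarith
  have c0pos: "c0 > 0" unfolding c0_def using A0 B0 mult_left_le_one_le[of B A] by simp
  have Epos: "E > 0" unfolding E_def using c0pos by (simp add: add_pos_nonneg)
  have Fpos: "F > 0" unfolding F_def using c0pos by (simp add: add_pos_nonneg)
  have Dpos: "D > 0" unfolding D_def using c0pos qpos wpos by (simp add: add_pos_pos)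
  have hN0: "N = A*(1-B)^2 + B*(1-A)^2 + 2*(1-A)*(1-B)*r"
    unfolding N_def al_def A_def B_def r_def
    by (simp only: cmod_power2) (simp add: power2_eq_square algebra_simps)
  have hN: "N = c0^2 - q^2*w^2"
    unfolding hN0 c0_def q2 w2 by (simp add: power2_eq_square algebra_simps)
  note C = core[OF c0pos qpos wpos hN]
  have abE: "2 - a * cnj b - cnj a * b = of_real E"
    unfolding E_def c0_def w2 r_def A_def B_def
    by (simp add: complex_eq_iff cmod_power2 power2_eq_square algebra_simps)
  have abF: "2 - (cmod a)^2 - (cmod b)^2 = F"
    unfolding F_def c0_def q2 A_def B_def by (simp add: algebra_simps)
  have abD: "1 - (cmod a)^2 * (cmod b)^2 + sqrt ((1 - (cmod a)^2) * (1 - (cmod b)^2)) * cmod (1 - cnj a * b) = D"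
    unfolding D_def c0_def q_def w_def A_def B_def by simp
  have alal: "a * of_real (1 - (cmod b)^2) + b * of_real (1 - (cmod a)^2) = al"
    unfolding al_def A_def B_def by simp
  have cen_in: "cmod cen < 1"
  proof -
    have "(cmod cen)^2 = N / E^2" unfolding cen_def N_def by (rule cmod_sq_divr)
    also have "... < 1" using C(1) Epos unfolding E_def by simp
    finally show ?thesis by (simp add: power_less_one_iff abs_square_less_1)
  qed
  have m_in: "cmod m < 1"
  proof -
    have "(cmod m)^2 = N / D^2" unfolding m_def N_def by (rule cmod_sq_divr)
    also have "... < 1" using C(3) Dpos unfolding D_def by simp
    finally show ?thesis by (simp add: power_less_one_iff abs_square_less_1)
  qed
  have p_in: "cmod p < 1"
  proof -
    have "(cmod p)^2 = N / F^2" unfolding p_def N_def by (rule cmod_sq_divr)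
    also have "... < 1" using C(2) Fpos unfolding F_def by simp
    finally show ?thesis by (simp add: power_less_one_iff abs_square_less_1)
  qed
  have m2: "(cmod m)^2 = N / D^2" unfolding m_def N_def by (rule cmod_sq_divr)
  have G1: "(cmod (cen - m))^2 / ((1 - (cmod cen)^2) * (1 - (cmod m)^2))
     = N*(1/(c0+w^2)-1/(c0+q*w))^2/((1-N/(c0+w^2)^2)*(1-N/(c0+q*w)^2))"
    unfolding cen_def m_def cmod_sq_ray cmod_sq_divr N_def[symmetric] E_def D_def ..
  have G2: "(cmod (m - p))^2 / ((1 - (cmod m)^2) * (1 - (cmod p)^2))
     = N*(1/(c0+q*w)-1/(c0+q^2))^2/((1-N/(c0+q*w)^2)*(1-N/(c0+q^2)^2))"
    unfolding p_def m_def cmod_sq_ray cmod_sq_divr N_def[symmetric] F_def D_def ..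
  have part1: "hrho cen m = hrho m p"
    unfolding hrho_sq[OF cen_in m_in] hrho_sq[OF m_in p_in] G1 G2 C(4) ..
  show ?thesis
    unfolding Let_def abE abF abD alal cen_def[symmetric] p_def[symmetric] m_def[symmetric]
  proof (intro conjI part1)
    define M where "M = hrho a b / 2"
    define d where "d = cmod (a - b) / q"
    have hM: "M = arsinh d" unfolding M_def hrho_def d_def q_def A_def B_def by simp
    have ab2: "(cmod (a-b))^2 = A + B - 2*r"
      using cmod_sq_diff[of a b] unfolding A_def B_def r_def by (simp add: mult.commute)
    have wq: "w^2 = q^2 + (cmod (a-b))^2" unfolding ab2 w2 q2 by (simp add: algebra_simps)
    have wgeq: "q \<le> w"
    proof -
      have "q^2 \<le> w^2" using wq by simp
      then show ?thesis using power2_le_imp_le[of q w] wpos by simp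
    qed
    have dnn: "d \<ge> 0" unfolding d_def using qpos by simp
    have dd: "d^2 + 1 = (w/q)^2"
    proof -
      have "d^2 = (cmod (a-b))^2 / q^2" unfolding d_def by (simp add: power_divide)
      also have "... = (w^2 - q^2)/q^2" using wq by simp
      also have "... = (w/q)^2 - 1" using qpos by (simp add: diff_divide_distrib power_divide)
      finally show ?thesis by simp
    qed
    define sg where "sg = sinh (arsinh d / 2)"
    have "\<not> arsinh d < 0" using dnn by simp
    then have "0 \<le> arsinh d" by linarith
    then have sgnn: "sg \<ge> 0" unfolding sg_def by simp
    have sg2: "sg^2 = (w/q - 1)/2"
    proof -
      have "cosh (arsinh d) = sqrt ((w/q)^2)" unfolding cosh_arsinh_real dd ..
      also have "... = w/q" using qpos wpos by simp
      finally have c1: "cosh (arsinh d) = w/q" .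
      have "cosh (arsinh d) = cosh (2 * (arsinh d / 2))" by simp
      also have "... = 1 + 2 * sg^2" unfolding cosh_double sg_def cosh_square_eq by simp
      finally show ?thesis using c1 by simp
    qed
    define k where "k = (E - D) / D"
    have kk: "sg^2 * (1 - (cmod m)^2) = k"
    proof -
      have "sg^2 * (1 - (cmod m)^2) = (w/q - 1)/2 * (1 - N/(c0+q*w)^2)" unfolding sg2 m2 D_def ..
      also have "... = ((c0+w^2)-(c0+q*w))/(c0+q*w)" by (rule C(5))
      also have "... = k" unfolding k_def E_def D_def ..
      finally show ?thesis .
    qed
    have knn: "k \<ge> 0"
    proof -
      have "E - D = w * (w - q)" unfolding E_def D_def by (simp add: power2_eq_square algebra_simps)
      then show ?thesis unfolding k_def using wgeq wpos Dpos by simp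
    qed
    have Ra: "Re (a * cnj al) = A*(1-B) + (1-A)*r"
      unfolding al_def A_def B_def r_def
      by (simp only: cmod_power2) (simp add: power2_eq_square algebra_simps)
    have ND: "N / D = c0 - q*w"
    proof -
      have "N = D * (c0 - q*w)" unfolding hN D_def by (simp add: power2_eq_square algebra_simps)
      then show ?thesis using Dpos by (metis less_irrefl nonzero_mult_div_cancel_left)
    qed
    have rel: "N/D - E + D = 2*Re (a * cnj al) - A*E"
    proof -
      have "N/D - E + D = (c0 - q*w) - E + D" by (simp only: ND)
      also have "... = 2*Re (a * cnj al) - A*E" unfolding Ra E_def D_def w2 c0_def by (simp add: algebra_simps)
      finally show ?thesis .
    qed
    have m_nn: "1 - (cmod m)^2 > 0" using m_in by (simp add: power_less_one_iff abs_square_less_1)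
    show "ball cen (cmod (cen - a)) = hball m (hrho a b / 2)"
    proof (rule set_eqI)
      fix y
      define Y where "Y = (cmod y)^2"
      define Z where "Z = Re (y * cnj al)"
      have e1: "(cmod (cen - y))^2 = N/E^2 - 2*Z/E + Y"
        by (simp only: cmod_sq_diff cen_def cmod_sq_divr re_divr N_def Z_def Y_def)
      have e2: "(cmod (cen - a))^2 = N/E^2 - 2*Re (a * cnj al)/E + A"
        by (simp only: cmod_sq_diff cen_def cmod_sq_divr re_divr N_def A_def)
      have e3: "(cmod (m - y))^2 = N/D^2 - 2*Z/D + Y"
        by (simp only: cmod_sq_diff m_def cmod_sq_divr re_divr N_def Z_def Y_def)
      have key: "(cmod (cen - y))^2 - (cmod (cen - a))^2 = D/E*((cmod (m - y))^2 - k*(1-Y))"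
        unfolding e1 e2 e3 k_def using key_aux[OF Epos Dpos rel] .
      have DE: "D/E > 0" using Dpos Epos by simp
      have L: "y \<in> ball cen (cmod (cen - a)) \<longleftrightarrow> (cmod (m - y))^2 < k*(1-Y)"
      proof -
        have "y \<in> ball cen (cmod (cen - a)) \<longleftrightarrow> cmod (cen - y) < cmod (cen - a)"
          by (simp add: dist_norm)
        also have "... \<longleftrightarrow> (cmod (cen - y))^2 < (cmod (cen - a))^2"
          using power2_less_imp_less[of "cmod (cen - y)" "cmod (cen - a)"]
            power_strict_mono[of "cmod (cen - y)" "cmod (cen - a)" 2] by auto
        also have "... \<longleftrightarrow> D/E*((cmod (m - y))^2 - k*(1-Y)) < 0" using key by linarith
        also have "... \<longleftrightarrow> (cmod (m - y))^2 - k*(1-Y) < 0" using pos_mult_less0_iff[OF DE] by simp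
        finally show ?thesis by simp
      qed
      have R: "y \<in> hball m (hrho a b / 2) \<longleftrightarrow> (cmod (m - y))^2 < k*(1-Y)"
      proof (cases "cmod y < 1")
        case True
        have Yp: "1 - Y > 0" unfolding Y_def using True by (simp add: power_less_one_iff abs_square_less_1)
        have P: "(1 - (cmod m)^2) * (1 - Y) > 0" using m_nn Yp by simp
        have "y \<in> hball m (hrho a b / 2) \<longleftrightarrow> hrho m y < M" unfolding hball_def M_def using True by simp
        also have "... \<longleftrightarrow> arsinh (sqrt ((cmod (m - y))^2 / ((1 - (cmod m)^2) * (1 - Y)))) < arsinh sg"
          unfolding hrho_sq[OF m_in True] hM sg_def arsinh_sinh_real Y_def by linarith
        also have "... \<longleftrightarrow> sqrt ((cmod (m - y))^2 / ((1 - (cmod m)^2) * (1 - Y))) < sqrt (sg^2)"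
          using sgnn by simp
        also have "... \<longleftrightarrow> (cmod (m - y))^2 / ((1 - (cmod m)^2) * (1 - Y)) < sg^2"
          by (simp only: real_sqrt_less_iff)
        also have "... \<longleftrightarrow> (cmod (m - y))^2 < sg^2 * ((1 - (cmod m)^2) * (1 - Y))"
          using P by (simp add: pos_divide_less_eq)
        also have "... \<longleftrightarrow> (cmod (m - y))^2 < k * (1 - Y)"
          using kk by (simp add: mult.assoc[symmetric])
        finally show ?thesis .
      next
        case False
        then have "1 - Y \<le> 0" unfolding Y_def by (simp add: abs_square_le_1 power_le_one_iff)
        then have "k * (1 - Y) \<le> 0" using knn by (simp add: mult_nonneg_nonpos)
        then have "\<not> (cmod (m - y))^2 < k*(1-Y)" by (smt (verit) zero_le_power2)
        then show ?thesis using False unfolding hball_def by simp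
      qed
      show "y \<in> ball cen (cmod (cen - a)) \<longleftrightarrow> y \<in> hball m (hrho a b / 2)" using L R by simp
    qed
  qed
qed
end
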